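(* Let $\mathbb C_4$ be the complex Clifford algebra generated by $e_1,\dots,e_4$ with $e_je_l+e_le_j=-2\delta_{jl}$, $e_{ij}=e_ie_j$. Let $S^+_4$ be the span of $v^+=\frac14(1-ie_{12})(1-ie_{34})$ and $v^-=\frac14(e_1+ie_2)(e_3+ie_4)$, and let $S^-_4$ be the span of $v^+=\frac14(1-ie_{12})(e_3+ie_4)$ and $v^-=\frac14(e_1+ie_2)(1-ie_{34})$; each is a realization of the basic spinor representation $S$ of $Spin(3)$ under left Clifford multiplication by $e_1,e_2,e_3$. Write $(a,b)$ for $a v^++b v^-$. For $k\in\mathbb N_0$ let $\mathcal M_k(\mathbb R^3,S^\pm_4)$ be the space of $S^\pm_4$-valued $k$-homogeneous polynomials $P$ on $\mathbb R^3$ with $(e_1\partial_{x_1}+e_2\partial_{x_2}+e_3\partial_{x_3})P=0$, and define its basis $F^{k,\pm}_0=\frac{1}{k!2^k}\overline z^k v^+$, $F^{k,\pm}_j=(\tilde X^-)^jF^{k,\pm}_0$ ($0<j\le 2k+1$), where $z=x_1+ix_2$, $\overline z=x_1-ix_2$, $\tilde X^-=2x_3\frac{\partial}{\partial\overline z}-z\frac{\partial}{\partial x_3}+\frac12(-e_{31}+ie_{23})$ with $\frac{\partial}{\partial \overline z}=\frac12(\partial_{x_1}+i\partial_{x_2})$ and the Clifford element acting by left multiplication. Using spherical coordinates $x_1=r\sin\theta\sin\varphi$, $x_2=r\sin\theta\cos\varphi$, $x_3=r\cos\theta$ ($r\ge0$, $-\pi\le\varphi\le\pi$, $0\le\theta\le\pi$),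 we have for each $j=0,\dots,2k+1$ $$F^{k,\pm}_j(r,\theta,\varphi)=i^{k-j}r^ke^{i(k-j)\varphi}\Big(P^{j-k}_k(\cos\theta),\ \pm\, ij\,e^{i\varphi}P^{j-k-1}_k(\cos\theta)\Big),$$ where $P^l_k(s)=\frac{1}{k!\,2^k}(1-s^2)^{l/2}\frac{d^{l+k}}{ds^{l+k}}(s^2-1)^k$ for $s\in\mathbb R$, and by convention $P^{k+1}_k=0=P^{-k-1}_k$.
   Context: $P^0_k$ is the $k$-th Legendre polynomial and $P^l_k$ are its associated Legendre functions. *)

theory Defs
  imports "HOL-Analysis.Analysis"
begin

text \<open>The complex Clifford algebra C_4, modelled concretely: an element is the coefficient
  function on blades e_A (A a subset of {1..4}); e_A = e_a1 ... e_am with a1 < ... < am.\<close>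

type_synonym cl = "nat set \<Rightarrow> complex"

definition blade_sign :: "nat set \<Rightarrow> nat set \<Rightarrow> complex" where
  "blade_sign A B = (-1) ^ (card {(a, b). a \<in> A \<and> b \<in> B \<and> b < a} + card (A \<inter> B))"

definition cl_mult :: "cl \<Rightarrow> cl \<Rightarrow> cl" (infixl "\<odot>" 70) where
  "cl_mult x y = (\<lambda>C. \<Sum>A\<in>Pow {1..4}. \<Sum>B\<in>Pow {1..4}.
      if (A - B) \<union> (B - A) = C then blade_sign A B * x A * y B else 0)"

definition cl_add :: "cl \<Rightarrow> cl \<Rightarrow> cl" where
  "cl_add x y = (\<lambda>A. x A + y A)"

definition cl_scale :: "complex \<Rightarrow> cl \<Rightarrow> cl" where
  "cl_scale c x = (\<lambda>A. c * x A)"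

definition cl_one :: cl where
  "cl_one = (\<lambda>A. if A = {} then 1 else 0)"

definition cl_gen :: "nat \<Rightarrow> cl" where
  "cl_gen j = (\<lambda>A. if A = {j} then 1 else 0)"

text \<open>Spinor basis vectors. \<open>pm = True\<close>: S^+_4, \<open>pm = False\<close>: S^-_4.\<close>

definition fac_a :: "nat \<Rightarrow> nat \<Rightarrow> cl" where
  "fac_a a b = cl_add cl_one (cl_scale (- \<i>) (cl_gen a \<odot> cl_gen b))"

definition fac_b :: "nat \<Rightarrow> nat \<Rightarrow> cl" where
  "fac_b a b = cl_add (cl_gen a) (cl_scale \<i> (cl_gen b))"

definition vplus :: "bool \<Rightarrow> cl" where
  "vplus pm = (if pm then cl_scale (1/4) (fac_a 1 2 \<odot> fac_a 3 4)
                     else cl_scale (1/4) (fac_a 1 2 \<odot> fac_b 3 4))"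

definition vminus :: "bool \<Rightarrow> cl" where
  "vminus pm = (if pm then cl_scale (1/4) (fac_b 1 2 \<odot> fac_b 3 4)
                      else cl_scale (1/4) (fac_b 1 2 \<odot> fac_a 3 4))"

type_synonym clfun = "real \<Rightarrow> real \<Rightarrow> real \<Rightarrow> cl"

definition pd1 :: "clfun \<Rightarrow> clfun" where
  "pd1 F = (\<lambda>x1 x2 x3 A. vector_derivative (\<lambda>t. F t x2 x3 A) (at x1))"

definition pd2 :: "clfun \<Rightarrow> clfun" where
  "pd2 F = (\<lambda>x1 x2 x3 A. vector_derivative (\<lambda>t. F x1 t x3 A) (at x2))"

definition pd3 :: "clfun \<Rightarrow> clfun" where
  "pd3 F = (\<lambda>x1 x2 x3 A. vector_derivative (\<lambda>t. F x1 x2 t A) (at x3))"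

definition Xminus :: "clfun \<Rightarrow> clfun" where
  "Xminus F = (\<lambda>x1 x2 x3.
     cl_add (cl_add
       (cl_scale (2 * complex_of_real x3)
          (cl_scale (1/2) (cl_add (pd1 F x1 x2 x3) (cl_scale \<i> (pd2 F x1 x2 x3)))))
       (cl_scale (- (complex_of_real x1 + \<i> * complex_of_real x2)) (pd3 F x1 x2 x3)))
     (cl_scale (1/2) (cl_add (cl_scale (-1) (cl_gen 3 \<odot> cl_gen 1))
                             (cl_scale \<i> (cl_gen 2 \<odot> cl_gen 3))) \<odot> F x1 x2 x3))"

definition F0 :: "nat \<Rightarrow> bool \<Rightarrow> clfun" where
  "F0 k pm = (\<lambda>x1 x2 x3. cl_scale (1 / (fact k * 2 ^ k) *
       (complex_of_real x1 - \<i> * complex_of_real x2) ^ k) (vplus pm))"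

definition Fkj :: "nat \<Rightarrow> bool \<Rightarrow> nat \<Rightarrow> clfun" where
  "Fkj k pm j = (Xminus ^^ j) (F0 k pm)"

text \<open>Associated Legendre functions P^l_k(s) = 1/(k! 2^k) (1-s^2)^(l/2) d^(l+k)/ds^(l+k) (s^2-1)^k,
  with (1-s^2)^(l/2) = sqrt(1-s^2)^l, and the convention P^l_k = 0 for |l| > k
  (only l = k+1 and l = -k-1 occur).\<close>

definition assoc_legendre :: "nat \<Rightarrow> int \<Rightarrow> real \<Rightarrow> real" where
  "assoc_legendre k l s =
     (if l < - int k \<or> l > int k then 0
      else 1 / (fact k * 2 ^ k) * (sqrt (1 - s\<^sup>2) powi l) *
           (deriv ^^ nat (l + int k)) (\<lambda>t. (t\<^sup>2 - 1) ^ k) s)"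

end

theory Submission
  imports Defs "HOL-Computational_Algebra.Polynomial"
begin


definition blade :: "nat set \<Rightarrow> cl" where "blade S = (\<lambda>C. if C = S then 1 else 0)"

lemma cl_mult_add_right: "x \<odot> cl_add y z = cl_add (x \<odot> y) (x \<odot> z)"
  unfolding cl_mult_def cl_add_def
  by (auto simp: fun_eq_iff sum.distrib[symmetric] distrib_left intro!: sum.cong)

lemma cl_mult_add_left: "cl_add x y \<odot> z = cl_add (x \<odot> z) (y \<odot> z)"
  unfolding cl_mult_def cl_add_def
  by (auto simp: fun_eq_iff sum.distrib[symmetric] distrib_left distrib_right intro!: sum.cong)

lemma cl_mult_scale_right: "x \<odot> cl_scale c y = cl_scale c (x \<odot> y)"
  unfolding cl_mult_def cl_scale_def
  by (auto simp: fun_eq_iff sum_distrib_left intro!: sum.cong)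

lemma cl_mult_scale_left: "cl_scale c x \<odot> y = cl_scale c (x \<odot> y)"
  unfolding cl_mult_def cl_scale_def
  by (auto simp: fun_eq_iff sum_distrib_left intro!: sum.cong)

lemma card_pairs: "finite A \<Longrightarrow> finite B \<Longrightarrow>
  card {(a, b). a \<in> A \<and> b \<in> B \<and> b < a} = (\<Sum>a\<in>A. \<Sum>b\<in>B. if b < a then 1 else 0)"
proof -
  assume f: "finite A" "finite B"
  have "{(a, b). a \<in> A \<and> b \<in> B \<and> b < a} = Sigma A (\<lambda>a. {b\<in>B. b < a})" by auto
  then have "card {(a, b). a \<in> A \<and> b \<in> B \<and> b < a} = (\<Sum>a\<in>A. card {b\<in>B. b < a})"
    using f by simp
  also have "\<dots> = (\<Sum>a\<in>A. \<Sum>b\<in>B. if b < a then 1 else 0)"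
  proof (intro sum.cong refl)
    fix a have "{b\<in>B. b<a} = B \<inter> {b. b<a}" by blast
    then show "card {b\<in>B. b < a} = (\<Sum>b\<in>B. if b < a then 1 else 0)"
      using f by (simp add: sum.If_cases)
  qed
  finally show ?thesis .
qed

lemma blade_sign_eval: "finite A \<Longrightarrow> finite B \<Longrightarrow> blade_sign A B =
   (-1) ^ ((\<Sum>a\<in>A. \<Sum>b\<in>B. if b < a then 1 else 0) + card (A \<inter> B))"
  by (simp add: blade_sign_def card_pairs)

lemma blade_mult: assumes "A \<subseteq> {1..4}" "B \<subseteq> {1..4}"
  shows "blade A \<odot> blade B = cl_scale (blade_sign A B) (blade ((A - B) \<union> (B - A)))"
proof (rule ext)
  fix C
  have "(blade A \<odot> blade B) C = (\<Sum>A'\<in>Pow {1..4}. \<Sum>B'\<in>Pow {1..4}.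
      if A' = A then (if B' = B then (if (A - B) \<union> (B - A) = C then blade_sign A B else 0) else 0) else 0)"
    unfolding cl_mult_def blade_def
    by (intro sum.cong refl, rename_tac A' B', case_tac "A' = A"; case_tac "B' = B"; simp)
  also have "\<dots> = (\<Sum>A'\<in>Pow {1..4}. if A' = A then (\<Sum>B'\<in>Pow {1..4}.
      if B' = B then (if (A - B) \<union> (B - A) = C then blade_sign A B else 0) else 0) else 0)"
    by (intro sum.cong refl) auto
  also have "\<dots> = (if (A - B) \<union> (B - A) = C then blade_sign A B else 0)"
    using assms by (simp add: sum.delta)
  finally show "(blade A \<odot> blade B) C = cl_scale (blade_sign A B) (blade ((A - B) \<union> (B - A))) C"
    by (auto simp: cl_scale_def blade_def)
qed

lemma one_blade: "cl_one = blade {}" by (simp add: cl_one_def blade_def fun_eq_iff)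
lemma gen_blade: "cl_gen j = blade {j}" by (simp add: cl_gen_def blade_def fun_eq_iff)

lemma blade_out: "\<not> C \<subseteq> {1..4} \<Longrightarrow> S \<subseteq> {1..4} \<Longrightarrow> blade S C = 0"
  by (auto simp: blade_def)


lemma subsets4: assumes "C \<subseteq> {1..4::nat}"
  and "P {}" "P {1}" "P {2}" "P {3}" "P {4}" "P {1,2}" "P {1,3}" "P {1,4}" "P {2,3}" "P {2,4}" "P {3,4}"
   "P {1,2,3}" "P {1,2,4}" "P {1,3,4}" "P {2,3,4}" "P {1,2,3,4}"
  shows "P C"
proof -
  have m: "x \<in> C \<Longrightarrow> x = 1 \<or> x = 2 \<or> x = 3 \<or> x = 4" for x using assms(1) by auto
  have "C = (if 1\<in>C then {1} else {}) \<union> ((if 2\<in>C then {2} else {}) \<union> ((if 3\<in>C then {3} else {}) \<union> (if 4\<in>C then {4} else {})))"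
    using m by auto
  then show ?thesis using assms(2-)
    by (cases "1 \<in> C"; cases "2 \<in> C"; cases "3 \<in> C"; cases "4 \<in> C") (simp_all add: insert_commute)
qed

definition Ecl :: cl where
  "Ecl = cl_scale (1/2) (cl_add (cl_scale (-1) (cl_gen 3 \<odot> cl_gen 1)) (cl_scale \<i> (cl_gen 2 \<odot> cl_gen 3)))"

lemmas cl_simps = cl_mult_add_right cl_mult_add_left cl_mult_scale_right cl_mult_scale_left
   blade_mult one_blade gen_blade

lemma cl_eqI:
  assumes "\<And>C. \<not> C \<subseteq> {1..4} \<Longrightarrow> x C = 0" "\<And>C. \<not> C \<subseteq> {1..4} \<Longrightarrow> y C = 0"
   "\<And>C. C \<subseteq> {1..4} \<Longrightarrow> x C = y C"
  shows "x = y"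
  using assms by (metis ext)

lemma mult_out: "\<not> C \<subseteq> {1..4} \<Longrightarrow> (x \<odot> y) C = 0"
  unfolding cl_mult_def by (intro sum.neutral ballI) auto


lemmas set_norm = insert_Diff_if Un_insert_left Un_insert_right insert_commute


lemma E_vp: "Ecl \<odot> vplus pm = cl_scale (if pm then 1 else -1) (vminus pm)"
  unfolding vplus_def vminus_def fac_a_def fac_b_def Ecl_def
  by (cases pm; simp add: cl_simps set_norm blade_sign_eval; rule ext; simp add: cl_add_def cl_scale_def algebra_simps)

lemma E_vm: "Ecl \<odot> vminus pm = (\<lambda>_. 0)"
  unfolding vplus_def vminus_def fac_a_def fac_b_def Ecl_def
  by (cases pm; simp add: cl_simps set_norm blade_sign_eval; rule ext; simp add: cl_add_def cl_scale_def algebra_simps)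


type_synonym sf = "real \<Rightarrow> real \<Rightarrow> real \<Rightarrow> complex"

inductive pf :: "sf \<Rightarrow> bool" where
  pf_const: "pf (\<lambda>x y z. c)"
| pf_x: "pf (\<lambda>x y z. complex_of_real x)"
| pf_y: "pf (\<lambda>x y z. complex_of_real y)"
| pf_z: "pf (\<lambda>x y z. complex_of_real z)"
| pf_add: "pf f \<Longrightarrow> pf g \<Longrightarrow> pf (\<lambda>x y z. f x y z + g x y z)"
| pf_diff: "pf f \<Longrightarrow> pf g \<Longrightarrow> pf (\<lambda>x y z. f x y z - g x y z)"
| pf_mult: "pf f \<Longrightarrow> pf g \<Longrightarrow> pf (\<lambda>x y z. f x y z * g x y z)"

definition d1 :: "sf \<Rightarrow> sf" where "d1 f = (\<lambda>x y z. vector_derivative (\<lambda>t. f t y z) (at x))"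
definition d2 :: "sf \<Rightarrow> sf" where "d2 f = (\<lambda>x y z. vector_derivative (\<lambda>t. f x t z) (at y))"
definition d3 :: "sf \<Rightarrow> sf" where "d3 f = (\<lambda>x y z. vector_derivative (\<lambda>t. f x y t) (at z))"

definition hd1 :: "sf \<Rightarrow> sf \<Rightarrow> bool" where
  "hd1 f F \<longleftrightarrow> (\<forall>x y z. ((\<lambda>t. f t y z) has_vector_derivative F x y z) (at x))"
definition hd2 :: "sf \<Rightarrow> sf \<Rightarrow> bool" where
  "hd2 f F \<longleftrightarrow> (\<forall>x y z. ((\<lambda>t. f x t z) has_vector_derivative F x y z) (at y))"
definition hd3 :: "sf \<Rightarrow> sf \<Rightarrow> bool" where
  "hd3 f F \<longleftrightarrow> (\<forall>x y z. ((\<lambda>t. f x y t) has_vector_derivative F x y z) (at z))"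

lemma hd1_d1: "hd1 f F \<Longrightarrow> d1 f = F"
  by (auto simp: hd1_def d1_def fun_eq_iff intro: vector_derivative_at)
lemma hd2_d2: "hd2 f F \<Longrightarrow> d2 f = F"
  by (auto simp: hd2_def d2_def fun_eq_iff intro: vector_derivative_at)
lemma hd3_d3: "hd3 f F \<Longrightarrow> d3 f = F"
  by (auto simp: hd3_def d3_def fun_eq_iff intro: vector_derivative_at)

lemma ofr_deriv: "((\<lambda>t. complex_of_real t) has_vector_derivative 1) (at x)"
  using has_vector_derivative_of_real[OF DERIV_ident, of "at x"] by simp

lemma pf_deriv: "pf f \<Longrightarrow> hd1 f (d1 f) \<and> hd2 f (d2 f) \<and> hd3 f (d3 f) \<and> pf (d1 f) \<and> pf (d2 f) \<and> pf (d3 f)"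
proof (induction rule: pf.induct)
  case (pf_const c)
  have "hd1 (\<lambda>x y z. c) (\<lambda>x y z. 0)" "hd2 (\<lambda>x y z. c) (\<lambda>x y z. 0)" "hd3 (\<lambda>x y z. c) (\<lambda>x y z. 0)"
    by (auto simp: hd1_def hd2_def hd3_def)
  then show ?case by (simp add: hd1_d1 hd2_d2 hd3_d3 pf.pf_const)
next
  case pf_x
  have "hd1 (\<lambda>x y z. complex_of_real x) (\<lambda>x y z. 1)" "hd2 (\<lambda>x y z. complex_of_real x) (\<lambda>x y z. 0)" "hd3 (\<lambda>x y z. complex_of_real x) (\<lambda>x y z. 0)"
    by (auto simp: hd1_def hd2_def hd3_def ofr_deriv)
  then show ?case by (simp add: hd1_d1 hd2_d2 hd3_d3 pf.pf_const)
next
  case pf_y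
  have "hd1 (\<lambda>x y z. complex_of_real y) (\<lambda>x y z. 0)" "hd2 (\<lambda>x y z. complex_of_real y) (\<lambda>x y z. 1)" "hd3 (\<lambda>x y z. complex_of_real y) (\<lambda>x y z. 0)"
    by (auto simp: hd1_def hd2_def hd3_def ofr_deriv)
  then show ?case by (simp add: hd1_d1 hd2_d2 hd3_d3 pf.pf_const)
next
  case pf_z
  have "hd1 (\<lambda>x y z. complex_of_real z) (\<lambda>x y z. 0)" "hd2 (\<lambda>x y z. complex_of_real z) (\<lambda>x y z. 0)" "hd3 (\<lambda>x y z. complex_of_real z) (\<lambda>x y z. 1)"
    by (auto simp: hd1_def hd2_def hd3_def ofr_deriv)
  then show ?case by (simp add: hd1_d1 hd2_d2 hd3_d3 pf.pf_const)
next
  case (pf_add f g)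
  have "hd1 (\<lambda>x y z. f x y z + g x y z) (\<lambda>x y z. d1 f x y z + d1 g x y z)"
       "hd2 (\<lambda>x y z. f x y z + g x y z) (\<lambda>x y z. d2 f x y z + d2 g x y z)"
       "hd3 (\<lambda>x y z. f x y z + g x y z) (\<lambda>x y z. d3 f x y z + d3 g x y z)"
    using pf_add.IH by (auto simp: hd1_def hd2_def hd3_def intro!: derivative_intros)
  then show ?case using pf_add.IH by (simp add: hd1_d1 hd2_d2 hd3_d3 pf.pf_add)
next
  case (pf_diff f g)
  have "hd1 (\<lambda>x y z. f x y z - g x y z) (\<lambda>x y z. d1 f x y z - d1 g x y z)"
       "hd2 (\<lambda>x y z. f x y z - g x y z) (\<lambda>x y z. d2 f x y z - d2 g x y z)"
       "hd3 (\<lambda>x y z. f x y z - g x y z) (\<lambda>x y z. d3 f x y z - d3 g x y z)"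
    using pf_diff.IH by (auto simp: hd1_def hd2_def hd3_def intro!: derivative_intros)
  then show ?case using pf_diff.IH by (simp add: hd1_d1 hd2_d2 hd3_d3 pf.pf_diff)
next
  case (pf_mult f g)
  have "hd1 (\<lambda>x y z. f x y z * g x y z) (\<lambda>x y z. f x y z * d1 g x y z + d1 f x y z * g x y z)"
       "hd2 (\<lambda>x y z. f x y z * g x y z) (\<lambda>x y z. f x y z * d2 g x y z + d2 f x y z * g x y z)"
       "hd3 (\<lambda>x y z. f x y z * g x y z) (\<lambda>x y z. f x y z * d3 g x y z + d3 f x y z * g x y z)"
    using pf_mult.IH by (auto simp: hd1_def hd2_def hd3_def intro!: has_vector_derivative_mult)
  then show ?case using pf_mult.IH pf_mult.hyps by (simp add: hd1_d1 hd2_d2 hd3_d3 pf.pf_add pf.pf_mult)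
qed


lemma hd1_add: "hd1 f F \<Longrightarrow> hd1 g G \<Longrightarrow> hd1 (\<lambda>x y z. f x y z + g x y z) (\<lambda>x y z. F x y z + G x y z)"
  by (auto simp: hd1_def intro!: derivative_intros)
lemma hd1_diff: "hd1 f F \<Longrightarrow> hd1 g G \<Longrightarrow> hd1 (\<lambda>x y z. f x y z - g x y z) (\<lambda>x y z. F x y z - G x y z)"
  by (auto simp: hd1_def intro!: derivative_intros)
lemma hd1_mult: "hd1 f F \<Longrightarrow> hd1 g G \<Longrightarrow> hd1 (\<lambda>x y z. f x y z * g x y z) (\<lambda>x y z. f x y z * G x y z + F x y z * g x y z)"
  by (auto simp: hd1_def intro!: has_vector_derivative_mult)
lemma hd1_const: "hd1 (\<lambda>x y z. c) (\<lambda>x y z. 0)"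
  by (auto simp: hd1_def)
lemma d1_add: "pf f \<Longrightarrow> pf g \<Longrightarrow> d1 (\<lambda>x y z. f x y z + g x y z) = (\<lambda>x y z. d1 f x y z + d1 g x y z)"
  by (rule hd1_d1, rule hd1_add) (auto dest: pf_deriv)
lemma d1_diff: "pf f \<Longrightarrow> pf g \<Longrightarrow> d1 (\<lambda>x y z. f x y z - g x y z) = (\<lambda>x y z. d1 f x y z - d1 g x y z)"
  by (rule hd1_d1, rule hd1_diff) (auto dest: pf_deriv)
lemma d1_mult: "pf f \<Longrightarrow> pf g \<Longrightarrow> d1 (\<lambda>x y z. f x y z * g x y z) = (\<lambda>x y z. f x y z * d1 g x y z + d1 f x y z * g x y z)"
  by (rule hd1_d1, rule hd1_mult) (auto dest: pf_deriv)
lemma d1_const: "d1 (\<lambda>x y z. c) = (\<lambda>x y z. 0)"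
  by (rule hd1_d1, rule hd1_const)
lemma d1_x: "d1 (\<lambda>x y z. complex_of_real x) = (\<lambda>x y z. 1)"
  by (rule hd1_d1) (auto simp: hd1_def ofr_deriv)
lemma d1_y: "d1 (\<lambda>x y z. complex_of_real y) = (\<lambda>x y z. 0)"
  by (rule hd1_d1) (auto simp: hd1_def ofr_deriv)
lemma d1_z: "d1 (\<lambda>x y z. complex_of_real z) = (\<lambda>x y z. 0)"
  by (rule hd1_d1) (auto simp: hd1_def ofr_deriv)

lemma hd2_add: "hd2 f F \<Longrightarrow> hd2 g G \<Longrightarrow> hd2 (\<lambda>x y z. f x y z + g x y z) (\<lambda>x y z. F x y z + G x y z)"
  by (auto simp: hd2_def intro!: derivative_intros)
lemma hd2_diff: "hd2 f F \<Longrightarrow> hd2 g G \<Longrightarrow> hd2 (\<lambda>x y z. f x y z - g x y z) (\<lambda>x y z. F x y z - G x y z)"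
  by (auto simp: hd2_def intro!: derivative_intros)
lemma hd2_mult: "hd2 f F \<Longrightarrow> hd2 g G \<Longrightarrow> hd2 (\<lambda>x y z. f x y z * g x y z) (\<lambda>x y z. f x y z * G x y z + F x y z * g x y z)"
  by (auto simp: hd2_def intro!: has_vector_derivative_mult)
lemma hd2_const: "hd2 (\<lambda>x y z. c) (\<lambda>x y z. 0)"
  by (auto simp: hd2_def)
lemma d2_add: "pf f \<Longrightarrow> pf g \<Longrightarrow> d2 (\<lambda>x y z. f x y z + g x y z) = (\<lambda>x y z. d2 f x y z + d2 g x y z)"
  by (rule hd2_d2, rule hd2_add) (auto dest: pf_deriv)
lemma d2_diff: "pf f \<Longrightarrow> pf g \<Longrightarrow> d2 (\<lambda>x y z. f x y z - g x y z) = (\<lambda>x y z. d2 f x y z - d2 g x y z)"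
  by (rule hd2_d2, rule hd2_diff) (auto dest: pf_deriv)
lemma d2_mult: "pf f \<Longrightarrow> pf g \<Longrightarrow> d2 (\<lambda>x y z. f x y z * g x y z) = (\<lambda>x y z. f x y z * d2 g x y z + d2 f x y z * g x y z)"
  by (rule hd2_d2, rule hd2_mult) (auto dest: pf_deriv)
lemma d2_const: "d2 (\<lambda>x y z. c) = (\<lambda>x y z. 0)"
  by (rule hd2_d2, rule hd2_const)
lemma d2_x: "d2 (\<lambda>x y z. complex_of_real x) = (\<lambda>x y z. 0)"
  by (rule hd2_d2) (auto simp: hd2_def ofr_deriv)
lemma d2_y: "d2 (\<lambda>x y z. complex_of_real y) = (\<lambda>x y z. 1)"
  by (rule hd2_d2) (auto simp: hd2_def ofr_deriv)
lemma d2_z: "d2 (\<lambda>x y z. complex_of_real z) = (\<lambda>x y z. 0)"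
  by (rule hd2_d2) (auto simp: hd2_def ofr_deriv)

lemma hd3_add: "hd3 f F \<Longrightarrow> hd3 g G \<Longrightarrow> hd3 (\<lambda>x y z. f x y z + g x y z) (\<lambda>x y z. F x y z + G x y z)"
  by (auto simp: hd3_def intro!: derivative_intros)
lemma hd3_diff: "hd3 f F \<Longrightarrow> hd3 g G \<Longrightarrow> hd3 (\<lambda>x y z. f x y z - g x y z) (\<lambda>x y z. F x y z - G x y z)"
  by (auto simp: hd3_def intro!: derivative_intros)
lemma hd3_mult: "hd3 f F \<Longrightarrow> hd3 g G \<Longrightarrow> hd3 (\<lambda>x y z. f x y z * g x y z) (\<lambda>x y z. f x y z * G x y z + F x y z * g x y z)"
  by (auto simp: hd3_def intro!: has_vector_derivative_mult)
lemma hd3_const: "hd3 (\<lambda>x y z. c) (\<lambda>x y z. 0)"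
  by (auto simp: hd3_def)
lemma d3_add: "pf f \<Longrightarrow> pf g \<Longrightarrow> d3 (\<lambda>x y z. f x y z + g x y z) = (\<lambda>x y z. d3 f x y z + d3 g x y z)"
  by (rule hd3_d3, rule hd3_add) (auto dest: pf_deriv)
lemma d3_diff: "pf f \<Longrightarrow> pf g \<Longrightarrow> d3 (\<lambda>x y z. f x y z - g x y z) = (\<lambda>x y z. d3 f x y z - d3 g x y z)"
  by (rule hd3_d3, rule hd3_diff) (auto dest: pf_deriv)
lemma d3_mult: "pf f \<Longrightarrow> pf g \<Longrightarrow> d3 (\<lambda>x y z. f x y z * g x y z) = (\<lambda>x y z. f x y z * d3 g x y z + d3 f x y z * g x y z)"
  by (rule hd3_d3, rule hd3_mult) (auto dest: pf_deriv)
lemma d3_const: "d3 (\<lambda>x y z. c) = (\<lambda>x y z. 0)"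
  by (rule hd3_d3, rule hd3_const)
lemma d3_x: "d3 (\<lambda>x y z. complex_of_real x) = (\<lambda>x y z. 0)"
  by (rule hd3_d3) (auto simp: hd3_def ofr_deriv)
lemma d3_y: "d3 (\<lambda>x y z. complex_of_real y) = (\<lambda>x y z. 0)"
  by (rule hd3_d3) (auto simp: hd3_def ofr_deriv)
lemma d3_z: "d3 (\<lambda>x y z. complex_of_real z) = (\<lambda>x y z. 1)"
  by (rule hd3_d3) (auto simp: hd3_def ofr_deriv)

definition Lop :: "sf \<Rightarrow> sf" where
 "Lop f = (\<lambda>x y z. complex_of_real z * (d1 f x y z + \<i> * d2 f x y z)
                   - (complex_of_real x + \<i> * complex_of_real y) * d3 f x y z)"

lemma pf_Lop: "pf f \<Longrightarrow> pf (Lop f)"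
  unfolding Lop_def using pf_deriv[of f]
  by (auto intro!: pf.intros)

lemma pf_d: "pf f \<Longrightarrow> pf (d1 f) \<and> pf (d2 f) \<and> pf (d3 f)" using pf_deriv by blast

lemma Lop_add: "pf f \<Longrightarrow> pf g \<Longrightarrow> Lop (\<lambda>x y z. f x y z + g x y z) = (\<lambda>x y z. Lop f x y z + Lop g x y z)"
  unfolding Lop_def by (simp add: d1_add d2_add d3_add fun_eq_iff algebra_simps)
lemma Lop_diff: "pf f \<Longrightarrow> pf g \<Longrightarrow> Lop (\<lambda>x y z. f x y z - g x y z) = (\<lambda>x y z. Lop f x y z - Lop g x y z)"
  unfolding Lop_def by (simp add: d1_diff d2_diff d3_diff fun_eq_iff algebra_simps)
lemma Lop_mult: "pf f \<Longrightarrow> pf g \<Longrightarrow> Lop (\<lambda>x y z. f x y z * g x y z) = (\<lambda>x y z. Lop f x y z * g x y z + f x y z * Lop g x y z)"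
  unfolding Lop_def by (simp add: d1_mult d2_mult d3_mult fun_eq_iff algebra_simps)
lemma Lop_const: "Lop (\<lambda>x y z. c) = (\<lambda>x y z. 0)"
  unfolding Lop_def by (simp add: d1_const d2_const d3_const)
lemma Lop_cmult: "pf f \<Longrightarrow> Lop (\<lambda>x y z. c * f x y z) = (\<lambda>x y z. c * Lop f x y z)"
  using Lop_mult[OF pf_const, of f c] by (simp add: Lop_const)

lemma pf_zb: "pf (\<lambda>x y z. complex_of_real x - \<i> * complex_of_real y)" by (intro pf.intros)
lemma pf_zz: "pf (\<lambda>x y z. complex_of_real x + \<i> * complex_of_real y)" by (intro pf.intros)

lemma Lop_zb: "Lop (\<lambda>x y z. complex_of_real x - \<i> * complex_of_real y) = (\<lambda>x y z. 2 * complex_of_real z)"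
  unfolding Lop_def
  by (simp add: d1_diff d2_diff d3_diff d1_mult d2_mult d3_mult pf.intros d1_x d1_y d1_z d2_x d2_y d2_z d3_x d3_y d3_z
      d1_const d2_const d3_const fun_eq_iff)
lemma Lop_zz: "Lop (\<lambda>x y z. complex_of_real x + \<i> * complex_of_real y) = (\<lambda>x y z. 0)"
  unfolding Lop_def
  by (simp add: d1_add d2_add d3_add d1_mult d2_mult d3_mult pf.intros d1_x d1_y d1_z d2_x d2_y d2_z d3_x d3_y d3_z
      d1_const d2_const d3_const fun_eq_iff)
lemma Lop_tt: "Lop (\<lambda>x y z. complex_of_real z) = (\<lambda>x y z. - (complex_of_real x + \<i> * complex_of_real y))"
  unfolding Lop_def
  by (simp add: d1_x d1_y d1_z d2_x d2_y d2_z d3_x d3_y d3_z fun_eq_iff)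


lemma pf_Lop_iter: "pf f \<Longrightarrow> pf ((Lop ^^ j) f)"
  by (induction j) (auto intro: pf_Lop)

lemma Lop_iter_cmult: "pf f \<Longrightarrow> (Lop ^^ j) (\<lambda>x y z. c * f x y z) = (\<lambda>x y z. c * (Lop ^^ j) f x y z)"
  by (induction j) (auto simp: Lop_cmult pf_Lop_iter)

lemma Lop_iter_const: "(Lop ^^ j) (\<lambda>x y z. c) = (\<lambda>x y z. if j = 0 then c else 0)"
proof (induction j)
  case (Suc j) then show ?case using Lop_const[of c] Lop_const[of 0] by auto
qed simp

abbreviation ZB :: sf where "ZB \<equiv> (\<lambda>x y z. complex_of_real x - \<i> * complex_of_real y)"
abbreviation ZZ :: sf where "ZZ \<equiv> (\<lambda>x y z. complex_of_real x + \<i> * complex_of_real y)"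

lemma Lop_zb_iter:
  assumes g: "pf g"
  shows "(Lop ^^ j) (\<lambda>x y z. ZB x y z * g x y z) = (\<lambda>x y z. ZB x y z * (Lop ^^ j) g x y z
     + 2 * of_nat j * complex_of_real z * (Lop ^^ (j - 1)) g x y z
     - of_nat (j * (j - 1)) * ZZ x y z * (Lop ^^ (j - 2)) g x y z)"
proof (induction j)
  case 0 then show ?case by simp
next
  case (Suc j)
  have pfs: "pf ((Lop ^^ i) g)" for i using g by (rule pf_Lop_iter)
  have pc: "pf (\<lambda>x y z. c * complex_of_real z)" for c by (intro pf.intros)
  have pc2: "pf (\<lambda>x y z. c * (complex_of_real x + \<i> * complex_of_real y))" for c by (intro pf.intros)
  have L1: "Lop (\<lambda>x y z. c * complex_of_real z) = (\<lambda>x y z. c * - (complex_of_real x + \<i> * complex_of_real y))" for c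
    using Lop_cmult[OF pf_z, of c] Lop_tt by simp
  have L2: "Lop (\<lambda>x y z. c * (complex_of_real x + \<i> * complex_of_real y)) = (\<lambda>x y z. 0)" for c
    using Lop_cmult[OF pf_zz, of c] Lop_zz by simp
  have "(Lop ^^ Suc j) (\<lambda>x y z. ZB x y z * g x y z) = Lop (\<lambda>x y z. ZB x y z * (Lop ^^ j) g x y z
     + (2 * of_nat j) * complex_of_real z * (Lop ^^ (j - 1)) g x y z
     - of_nat (j * (j - 1)) * ZZ x y z * (Lop ^^ (j - 2)) g x y z)"
    using Suc by simp
  also have "\<dots> = (\<lambda>x y z. (2 * complex_of_real z * (Lop ^^ j) g x y z + ZB x y z * Lop ((Lop ^^ j) g) x y z)
     + ((2 * of_nat j) * - (complex_of_real x + \<i> * complex_of_real y) * (Lop ^^ (j - 1)) g x y z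
       + (2 * of_nat j) * complex_of_real z * Lop ((Lop ^^ (j - 1)) g) x y z)
     - (0 * (Lop ^^ (j - 2)) g x y z + of_nat (j * (j - 1)) * ZZ x y z * Lop ((Lop ^^ (j - 2)) g) x y z))"
    apply (subst Lop_diff)
      apply (intro pf.intros pfs pc pc2)+
    apply (subst Lop_add)
      apply (intro pf.intros pfs pc pc2)+
    apply (subst Lop_mult, intro pf.intros pfs, intro pf.intros pfs)+
    apply (simp add: Lop_zb L1 L2 Lop_const Lop_tt Lop_zz fun_eq_iff algebra_simps)
    done
  also have "\<dots> = (\<lambda>x y z. ZB x y z * (Lop ^^ Suc j) g x y z
     + 2 * of_nat (Suc j) * complex_of_real z * (Lop ^^ (Suc j - 1)) g x y z
     - of_nat (Suc j * (Suc j - 1)) * ZZ x y z * (Lop ^^ (Suc j - 2)) g x y z)"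
  proof (cases j)
    case 0 then show ?thesis by (simp add: fun_eq_iff)
  next
    case (Suc m)
    then show ?thesis
      by (cases m) (simp_all add: fun_eq_iff algebra_simps)
  qed
  finally show ?case .
qed

definition QQ :: "real poly" where "QQ = [:-1, 0, 1:]"

lemma pderiv_QQ: "pderiv QQ = [:0, 2:]" by (simp add: QQ_def pderiv_pCons)

lemma pderiv_rec: "(pderiv ^^ j) (QQ * p) = QQ * (pderiv ^^ j) p
   + smult (2 * of_nat j) ([:0, 1:] * (pderiv ^^ (j - 1)) p)
   + smult (of_nat (j * (j - 1))) ((pderiv ^^ (j - 2)) p)"
proof (induction j)
  case 0 then show ?case by simp
next
  case (Suc j)
  have "(pderiv ^^ Suc j) (QQ * p) = pderiv (QQ * (pderiv ^^ j) p
   + smult (2 * of_nat j) ([:0, 1:] * (pderiv ^^ (j - 1)) p)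
   + smult (of_nat (j * (j - 1))) ((pderiv ^^ (j - 2)) p))" using Suc by simp
  also have "\<dots> = QQ * pderiv ((pderiv ^^ j) p) + [:0,2:] * (pderiv ^^ j) p
     + smult (2 * of_nat j) ((pderiv ^^ (j - 1)) p + [:0, 1:] * pderiv ((pderiv ^^ (j - 1)) p))
     + smult (of_nat (j * (j - 1))) (pderiv ((pderiv ^^ (j - 2)) p))"
    by (simp add: pderiv_add pderiv_mult pderiv_smult pderiv_QQ pderiv_pCons algebra_simps smult_add_right)
  also have "\<dots> = QQ * (pderiv ^^ Suc j) p
   + smult (2 * of_nat (Suc j)) ([:0, 1:] * (pderiv ^^ (Suc j - 1)) p)
   + smult (of_nat (Suc j * (Suc j - 1))) ((pderiv ^^ (Suc j - 2)) p)"
  proof (cases j)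
    case 0 then show ?thesis
      by (intro poly_eq_poly_eq_iff[THEN iffD1] ext) (simp add: algebra_simps)
  next
    case (Suc m)
    then show ?thesis
      by (cases m; intro poly_eq_poly_eq_iff[THEN iffD1] ext) (simp_all add: algebra_simps)
  qed
  finally show ?case .
qed

definition DD :: "nat \<Rightarrow> nat \<Rightarrow> real \<Rightarrow> real" where
  "DD k j u = poly ((pderiv ^^ j) (QQ ^ k)) u"

lemma DD_rec: "DD (Suc k) j u = (u\<^sup>2 - 1) * DD k j u + 2 * of_nat j * u * DD k (j - 1) u
   + of_nat (j * (j - 1)) * DD k (j - 2) u"
  by (simp only: DD_def power_Suc pderiv_rec) (simp add: QQ_def power2_eq_square algebra_simps)

lemma pderiv_iter_one: "(pderiv ^^ j) (1::real poly) = (if j = 0 then 1 else 0)"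
  by (induction j) (auto simp: pderiv_1)

lemma DD_0: "DD 0 j u = (if j = 0 then 1 else 0)"
  unfolding DD_def by (simp add: pderiv_iter_one)


lemma deriv_iter_poly: "(deriv ^^ j) (poly p) = poly ((pderiv ^^ j) (p :: real poly))"
proof (induction j)
  case (Suc j)
  show ?case using Suc by (auto intro!: DERIV_imp_deriv poly_DERIV)
qed simp

lemma legendre_fun: "(\<lambda>t::real. (t\<^sup>2 - 1) ^ k) = poly (QQ ^ k)"
  by (simp add: QQ_def fun_eq_iff poly_power power2_eq_square algebra_simps)

lemma deriv_legendre: "(deriv ^^ j) (\<lambda>t::real. (t\<^sup>2 - 1) ^ k) u = DD k j u"
  by (simp add: legendre_fun deriv_iter_poly DD_def)

lemma degree_pderiv_iter: "degree ((pderiv ^^ j) (p :: real poly)) = degree p - j"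
  by (induction j) (simp_all add: degree_pderiv)

lemma pderiv_iter_high: "degree p < j \<Longrightarrow> (pderiv ^^ j) (p :: real poly) = 0"
proof -
  assume a: "degree p < j"
  then obtain i where j: "j = Suc i" by (cases j) auto
  have "degree ((pderiv ^^ i) p) = 0" using a j by (simp add: degree_pderiv_iter)
  then show ?thesis using j by (simp add: pderiv_eq_0_iff)
qed

lemma degree_QQ_pow: "degree (QQ ^ k) = 2 * k"
proof -
  have "QQ \<noteq> 0" "degree QQ = 2" by (simp_all add: QQ_def)
  then show ?thesis by (simp add: degree_power_eq)
qed

lemma DD_high: "2 * k < j \<Longrightarrow> DD k j u = 0"
  by (simp add: DD_def pderiv_iter_high degree_QQ_pow)

lemma DD_pm1: assumes s: "\<sigma>\<^sup>2 = (1::real)"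
  shows "j \<le> k \<Longrightarrow> DD k j \<sigma> = (if j < k then 0 else fact k * (2 * \<sigma>) ^ k)"
proof (induction k arbitrary: j)
  case 0 then show ?case by (simp add: DD_0)
next
  case (Suc k)
  show ?case
  proof (cases j)
    case 0 then show ?thesis using s by (simp add: DD_rec)
  next
    case (Suc i)
    have i: "i \<le> k" using Suc \<open>j \<le> Suc k\<close> by simp
    show ?thesis
    proof (cases i)
      case 0
      then show ?thesis using Suc i s Suc.IH[of 0] by (auto simp: DD_rec)
    next
      case (Suc i')
      have "DD k i' \<sigma> = 0" using Suc.IH[of i'] Suc i by simp
      then show ?thesis using Suc \<open>j = Suc i\<close> i s Suc.IH[of i]
        by (auto simp: DD_rec algebra_simps)
    qed
  qed
qed


lemma pf_pow: "pf f \<Longrightarrow> pf (\<lambda>x y z. f x y z ^ k)"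
proof (induction k)
  case 0 then show ?case using pf_const[of 1] by simp
next
  case (Suc k)
  then show ?case using pf_mult[OF Suc.prems Suc.IH] by simp
qed

lemma ZZ_ZB: "ZZ x y z * ZB x y z = complex_of_real (x\<^sup>2 + y\<^sup>2)"
  by (simp add: algebra_simps power2_eq_square complex_eq_iff)

lemma key:
  assumes r: "r > 0" and rr: "r\<^sup>2 = x\<^sup>2 + y\<^sup>2 + (r * u)\<^sup>2"
  shows "complex_of_real r ^ j * ZZ x y (r * u) ^ k * (Lop ^^ j) (\<lambda>x y z. ZB x y z ^ k) x y (r * u)
     = (-1) ^ (k + j) * complex_of_real r ^ (2 * k) * ZZ x y (r * u) ^ j * complex_of_real (DD k j u)"
proof (induction k arbitrary: j)
  case 0
  have "(\<lambda>x y z. ZB x y z ^ 0) = (\<lambda>x y z. 1)" by simp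
  then show ?case by (simp add: Lop_iter_const DD_0)
next
  case (Suc k)
  define A where "A i = (Lop ^^ i) (\<lambda>x y z. ZB x y z ^ k) x y (r * u)" for i
  define W where "W = ZZ x y (r * u)"
  define V where "V = ZB x y (r * u)"
  define R where "R = complex_of_real r"
  define U where "U = complex_of_real u"
  define d where "d i = complex_of_real (DD k i u)" for i
  have IH: "R ^ i * W ^ k * A i = (-1) ^ (k + i) * R ^ (2 * k) * W ^ i * d i" for i
    using Suc.IH[of i] by (simp add: A_def W_def R_def d_def)
  have WV: "W * V = R\<^sup>2 - R\<^sup>2 * U\<^sup>2"
  proof -
    have "x\<^sup>2 + y\<^sup>2 = r\<^sup>2 - r\<^sup>2 * u\<^sup>2" using rr by (simp add: power_mult_distrib)
    then show ?thesis unfolding W_def V_def R_def U_def ZZ_ZB by simp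
  qed
  have e: "(\<lambda>x y z. ZB x y z ^ Suc k) = (\<lambda>x y z. ZB x y z * ZB x y z ^ k)" by simp
  have rec: "(Lop ^^ j) (\<lambda>x y z. ZB x y z ^ Suc k) x y (r * u) = V * A j + 2 * of_nat j * (R * U) * A (j - 1)
      - of_nat (j * (j - 1)) * W * A (j - 2)"
    unfolding e Lop_zb_iter[OF pf_pow[OF pf_zb]] by (simp add: A_def V_def W_def R_def U_def)
  have Drec: "complex_of_real (DD (Suc k) j u) = (U\<^sup>2 - 1) * d j + 2 * of_nat j * U * d (j - 1)
      + of_nat (j * (j - 1)) * d (j - 2)"
    by (simp add: DD_rec d_def U_def)
  have goal: "R ^ j * W ^ Suc k * (V * A j + 2 * of_nat j * (R * U) * A (j - 1)
      - of_nat (j * (j - 1)) * W * A (j - 2)) =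
      (-1) ^ (Suc k + j) * R ^ (2 * Suc k) * W ^ j * ((U\<^sup>2 - 1) * d j + 2 * of_nat j * U * d (j - 1)
      + of_nat (j * (j - 1)) * d (j - 2))"
  proof (cases j)
    case 0
    have "R ^ j * W ^ Suc k * (V * A j + 2 * of_nat j * (R * U) * A (j - 1)
      - of_nat (j * (j - 1)) * W * A (j - 2)) = (W * V) * (R ^ 0 * W ^ k * A 0)"
      using 0 by (simp add: algebra_simps)
    also have "\<dots> = (R\<^sup>2 - R\<^sup>2 * U\<^sup>2) * ((-1) ^ (k + 0) * R ^ (2 * k) * W ^ 0 * d 0)"
      by (simp only: WV IH)
    finally show ?thesis using 0 by (simp add: algebra_simps power2_eq_square)
  next
    case (Suc m)
    show ?thesis
    proof (cases m)
      case 0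
      have "R ^ j * W ^ Suc k * (V * A j + 2 * of_nat j * (R * U) * A (j - 1)
        - of_nat (j * (j - 1)) * W * A (j - 2)) = (W * V) * (R ^ 1 * W ^ k * A 1)
        + 2 * U * R * R * W * (R ^ 0 * W ^ k * A 0)"
        using Suc 0 by (simp add: algebra_simps)
      also have "\<dots> = (R\<^sup>2 - R\<^sup>2 * U\<^sup>2) * ((-1) ^ (k + 1) * R ^ (2 * k) * W ^ 1 * d 1)
        + 2 * U * R * R * W * ((-1) ^ (k + 0) * R ^ (2 * k) * W ^ 0 * d 0)"
        by (simp only: WV IH)
      finally show ?thesis using Suc 0 by (simp add: algebra_simps power2_eq_square)
    next
      case (Suc n)
      have jj: "j = Suc (Suc n)" using \<open>j = Suc m\<close> Suc by simp
      have "R ^ j * W ^ Suc k * (V * A j + 2 * of_nat j * (R * U) * A (j - 1)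
        - of_nat (j * (j - 1)) * W * A (j - 2)) = (W * V) * (R ^ (Suc (Suc n)) * W ^ k * A (Suc (Suc n)))
        + 2 * of_nat j * U * R * R * W * (R ^ (Suc n) * W ^ k * A (Suc n))
        - of_nat (j * (j - 1)) * W * W * R * R * (R ^ n * W ^ k * A n)"
        using jj by (simp add: algebra_simps)
      also have "\<dots> = (R\<^sup>2 - R\<^sup>2 * U\<^sup>2) * ((-1) ^ (k + Suc (Suc n)) * R ^ (2 * k) * W ^ (Suc (Suc n)) * d (Suc (Suc n)))
        + 2 * of_nat j * U * R * R * W * ((-1) ^ (k + Suc n) * R ^ (2 * k) * W ^ (Suc n) * d (Suc n))
        - of_nat (j * (j - 1)) * W * W * R * R * ((-1) ^ (k + n) * R ^ (2 * k) * W ^ n * d n)"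
        by (simp only: WV IH)
      finally show ?thesis using jj by (simp add: algebra_simps power2_eq_square)
    qed
  qed
  show ?case
    using goal unfolding rec[symmetric] Drec[symmetric] by (simp add: R_def W_def)
qed


lemma at_axis: "(Lop ^^ j) (\<lambda>x y z. ZB x y z ^ k) 0 0 z = (if j = k then fact k * 2 ^ k * complex_of_real z ^ k else 0)"
proof (induction k arbitrary: j)
  case 0
  have "(\<lambda>x y z. ZB x y z ^ 0) = (\<lambda>x y z. 1)" by simp
  then show ?case by (simp add: Lop_iter_const)
next
  case (Suc k)
  have e: "(\<lambda>x y z. ZB x y z ^ Suc k) = (\<lambda>x y z. ZB x y z * ZB x y z ^ k)" by simp
  have rec: "(Lop ^^ j) (\<lambda>x y z. ZB x y z ^ Suc k) 0 0 z = 2 * of_nat j * complex_of_real z * (Lop ^^ (j - 1)) (\<lambda>x y z. ZB x y z ^ k) 0 0 z"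
    unfolding e Lop_zb_iter[OF pf_pow[OF pf_zb]] by simp
  show ?case
  proof (cases j)
    case 0 then show ?thesis using rec by simp
  next
    case (Suc i)
    then show ?thesis using rec Suc.IH[of i] by (simp add: algebra_simps)
  qed
qed

definition rep :: "bool \<Rightarrow> sf \<Rightarrow> sf \<Rightarrow> clfun" where
  "rep pm a b = (\<lambda>x y z. cl_add (cl_scale (a x y z) (vplus pm)) (cl_scale (b x y z) (vminus pm)))"

lemma pd1_rep: "pf a \<Longrightarrow> pf b \<Longrightarrow> pd1 (rep pm a b) = rep pm (d1 a) (d1 b)"
  unfolding pd1_def rep_def cl_add_def cl_scale_def
  apply (intro ext vector_derivative_at)
  apply (intro has_vector_derivative_add has_vector_derivative_mult_left)
  using pf_deriv unfolding hd1_def by blast+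
lemma pd2_rep: "pf a \<Longrightarrow> pf b \<Longrightarrow> pd2 (rep pm a b) = rep pm (d2 a) (d2 b)"
  unfolding pd2_def rep_def cl_add_def cl_scale_def
  apply (intro ext vector_derivative_at)
  apply (intro has_vector_derivative_add has_vector_derivative_mult_left)
  using pf_deriv unfolding hd2_def by blast+
lemma pd3_rep: "pf a \<Longrightarrow> pf b \<Longrightarrow> pd3 (rep pm a b) = rep pm (d3 a) (d3 b)"
  unfolding pd3_def rep_def cl_add_def cl_scale_def
  apply (intro ext vector_derivative_at)
  apply (intro has_vector_derivative_add has_vector_derivative_mult_left)
  using pf_deriv unfolding hd3_def by blast+

lemma Xminus_rep: assumes "pf a" "pf b"
  shows "Xminus (rep pm a b) = rep pm (Lop a) (\<lambda>x y z. Lop b x y z + (if pm then 1 else -1) * a x y z)"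
proof -
  have E: "Ecl \<odot> rep pm a b x y z = cl_scale ((if pm then 1 else -1) * a x y z) (vminus pm)" for x y z
    unfolding rep_def cl_mult_add_right cl_mult_scale_right E_vp E_vm
    by (simp add: cl_add_def cl_scale_def fun_eq_iff)
  show ?thesis
    unfolding Xminus_def pd1_rep[OF assms] pd2_rep[OF assms] pd3_rep[OF assms] Ecl_def[symmetric] E
    by (simp add: rep_def Lop_def cl_add_def cl_scale_def fun_eq_iff algebra_simps)
qed

definition cK :: "nat \<Rightarrow> complex" where "cK k = 1 / (fact k * 2 ^ k)"
definition eps :: "bool \<Rightarrow> complex" where "eps pm = (if pm then 1 else -1)"

lemma Fkj_rep: "Fkj k pm j = rep pm (\<lambda>x y z. cK k * (Lop ^^ j) (\<lambda>x y z. ZB x y z ^ k) x y z)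
     (\<lambda>x y z. eps pm * of_nat j * cK k * (Lop ^^ (j - 1)) (\<lambda>x y z. ZB x y z ^ k) x y z)"
proof (induction j)
  case 0
  show ?case by (simp add: Fkj_def F0_def rep_def cK_def cl_add_def cl_scale_def fun_eq_iff)
next
  case (Suc j)
  have pz: "pf (\<lambda>x y z. ZB x y z ^ k)" by (rule pf_pow[OF pf_zb])
  have pA: "pf (\<lambda>x y z. c * (Lop ^^ i) (\<lambda>x y z. ZB x y z ^ k) x y z)" for c i
    by (intro pf.intros pf_Lop_iter pz)
  have "Fkj k pm (Suc j) = Xminus (Fkj k pm j)" by (simp add: Fkj_def)
  also have "\<dots> = rep pm (\<lambda>x y z. cK k * (Lop ^^ Suc j) (\<lambda>x y z. ZB x y z ^ k) x y z)
     (\<lambda>x y z. eps pm * of_nat j * cK k * Lop ((Lop ^^ (j - 1)) (\<lambda>x y z. ZB x y z ^ k)) x y z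
        + (if pm then 1 else -1) * (cK k * (Lop ^^ j) (\<lambda>x y z. ZB x y z ^ k) x y z))"
    unfolding Suc Xminus_rep[OF pA pA] Lop_cmult[OF pf_Lop_iter[OF pz]] by simp
  also have "\<dots> = rep pm (\<lambda>x y z. cK k * (Lop ^^ Suc j) (\<lambda>x y z. ZB x y z ^ k) x y z)
     (\<lambda>x y z. eps pm * of_nat (Suc j) * cK k * (Lop ^^ (Suc j - 1)) (\<lambda>x y z. ZB x y z ^ k) x y z)"
    by (cases j) (simp_all add: eps_def algebra_simps)
  finally show ?case .
qed



lemma ii_sq_pow: "\<i> ^ m * \<i> ^ m = (-1::complex) ^ m"
  by (simp add: power_mult_distrib[symmetric])

lemma alg_ge:
  fixes R S E W L D :: complex
  assumes nz: "R \<noteq> 0" "S \<noteq> 0" "E \<noteq> 0" and W: "W = \<i> * R * S / E"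
    and h: "R ^ (k + m) * W ^ k * L = (-1) ^ (k + (k + m)) * R ^ (2 * k) * W ^ (k + m) * D"
  shows "L = inverse (\<i> ^ m) * R ^ k * inverse (E ^ m) * (S ^ m * D)"
proof -
  have Wnz: "W \<noteq> 0" using nz W by simp
  have m1: "(-1::complex) ^ (k + (k + m)) = (-1) ^ m"
    by (simp add: power_add power_mult_distrib[symmetric])
  have "R ^ k * W ^ k * (R ^ m * L) = R ^ (k + m) * W ^ k * L" by (simp add: power_add ac_simps)
  also have "\<dots> = R ^ k * W ^ k * ((-1) ^ m * R ^ k * W ^ m * D)"
    unfolding h m1 by (simp add: power_add mult_2 mult_2_right ac_simps)
  finally have "R ^ k * W ^ k * (R ^ m * L) = R ^ k * W ^ k * ((-1) ^ m * R ^ k * W ^ m * D)" .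
  then have "R ^ m * L = (-1) ^ m * R ^ k * W ^ m * D" using nz Wnz by simp
  then have "R ^ m * L = (-1) ^ m * R ^ k * (\<i> ^ m * R ^ m * S ^ m / E ^ m) * D"
    using W by (simp add: power_mult_distrib power_divide)
  then have "L = (-1) ^ m * \<i> ^ m * R ^ k * S ^ m * D / E ^ m"
    using nz by (simp add: field_simps)
  moreover have "(-1) ^ m * \<i> ^ m = inverse (\<i> ^ m)"
  proof -
    have "\<i> ^ m * ((-1) ^ m * \<i> ^ m) = (-1) ^ m * (\<i> ^ m * \<i> ^ m)" by (simp add: ac_simps)
    also have "\<dots> = 1" by (simp add: ii_sq_pow power_mult_distrib[symmetric])
    finally show ?thesis by (simp add: field_simps)
  qed
  ultimately have "L = inverse (\<i> ^ m) * R ^ k * S ^ m * D / E ^ m" by simp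
  then show ?thesis by (simp add: divide_inverse ac_simps)
qed

lemma alg_lt:
  fixes R S E W L D :: complex
  assumes nz: "R \<noteq> 0" "S \<noteq> 0" "E \<noteq> 0" and W: "W = \<i> * R * S / E"
    and h: "R ^ j * W ^ (j + m) * L = (-1) ^ ((j + m) + j) * R ^ (2 * (j + m)) * W ^ j * D"
  shows "L = \<i> ^ m * R ^ (j + m) * E ^ m * (inverse (S ^ m) * D)"
proof -
  have Wnz: "W \<noteq> 0" using nz W by simp
  have m1: "(-1::complex) ^ ((j + m) + j) = (-1) ^ m"
    by (simp add: power_add power_mult_distrib[symmetric])
  have "R ^ j * W ^ j * (W ^ m * L) = R ^ j * W ^ (j + m) * L" by (simp add: power_add ac_simps)
  also have "\<dots> = R ^ j * W ^ j * ((-1) ^ m * R ^ (j + 2 * m) * D)"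
    unfolding h m1 by (simp add: power_add mult_2 mult_2_right ac_simps)
  finally have "R ^ j * W ^ j * (W ^ m * L) = R ^ j * W ^ j * ((-1) ^ m * R ^ (j + 2 * m) * D)" .
  then have "W ^ m * L = (-1) ^ m * R ^ (j + 2 * m) * D" using nz Wnz by simp
  then have "(\<i> ^ m * R ^ m * S ^ m / E ^ m) * L = (-1) ^ m * R ^ (j + 2 * m) * D"
    using W by (simp add: power_mult_distrib power_divide)
  moreover have "R ^ (j + 2 * m) = R ^ (j + m) * R ^ m" by (simp add: power_add mult_2)
  ultimately have "L = (-1) ^ m * R ^ (j + m) * E ^ m * D / (\<i> ^ m * S ^ m)"
    using nz by (simp add: field_simps)
  moreover have "(-1) ^ m / \<i> ^ m = \<i> ^ m"
    using ii_sq_pow[of m] by (simp add: field_simps)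
  ultimately show ?thesis using nz by (simp add: field_simps)
qed



lemma exp_cis_powi: "exp (\<i> * of_int n * complex_of_real \<phi>) = cis \<phi> powi n"
  by (simp add: cis_conv_exp exp_power_int ac_simps)

lemma sq_expand: "(r * a * b)\<^sup>2 + (r * a * c)\<^sup>2 + (r * d)\<^sup>2 = r\<^sup>2 * (a\<^sup>2 * (b\<^sup>2 + c\<^sup>2) + d\<^sup>2)"
  for r a b c d :: real
  by (simp add: power2_eq_square algebra_simps)

lemma AL_eq:
  assumes j: "j \<le> 2 * k + 1" and th: "0 \<le> \<theta>" "\<theta> \<le> pi"
  shows "assoc_legendre k (int j - int k) (cos \<theta>) =
    (if j = 2 * k + 1 then 0 else 1 / (fact k * 2 ^ k) * sin \<theta> powi (int j - int k) * DD k j (cos \<theta>))"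
proof -
  have s: "sqrt (1 - (cos \<theta>)\<^sup>2) = sin \<theta>"
    using sin_ge_zero[OF th] by (simp add: sin_squared_eq[symmetric])
  have n: "nat (int j - int k + int k) = j" by simp
  show ?thesis using j unfolding assoc_legendre_def s n deriv_legendre by auto
qed

lemma scalar_main:
  fixes k j :: nat and r \<theta> \<phi> :: real
  assumes j: "j \<le> 2 * k + 1" and r: "0 \<le> r" and th: "0 \<le> \<theta>" "\<theta> \<le> pi"
  shows "cK k * (Lop ^^ j) (\<lambda>x y z. ZB x y z ^ k) (r * sin \<theta> * sin \<phi>) (r * sin \<theta> * cos \<phi>) (r * cos \<theta>) =
    \<i> powi (int k - int j) * complex_of_real (r ^ k) * exp (\<i> * of_int (int k - int j) * complex_of_real \<phi>)
    * complex_of_real (assoc_legendre k (int j - int k) (cos \<theta>))"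
proof -
  define L where "L = (Lop ^^ j) (\<lambda>x y z. ZB x y z ^ k) (r * sin \<theta> * sin \<phi>) (r * sin \<theta> * cos \<phi>) (r * cos \<theta>)"
  note AL = AL_eq[OF j th]
  have cKe: "cK k = complex_of_real (1 / (fact k * 2 ^ k))" by (simp add: cK_def)
  show ?thesis
  proof (cases "r = 0")
    case True
    then have "L = (if j = k then fact k * 2 ^ k * 0 ^ k else 0)" using at_axis[of j k 0] by (simp add: L_def)
    then show ?thesis
      using True j AL unfolding L_def[symmetric]
      by (cases "k = 0") (auto simp: cK_def DD_0 power_0_left)
  next
    case False
    then have rpos: "r > 0" using r by simp
    show ?thesis
    proof (cases "sin \<theta> = 0")
      case True
      have c2: "(cos \<theta>)\<^sup>2 = 1" using True sin_cos_squared_add[of \<theta>] by simp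
      have "L = (if j = k then fact k * 2 ^ k * complex_of_real (r * cos \<theta>) ^ k else 0)"
        using at_axis[of j k "r * cos \<theta>"] True by (simp add: L_def)
      then show ?thesis
        using True j AL DD_pm1[OF c2, of k k] unfolding L_def[symmetric]
        by (auto simp: cK_def power_mult_distrib)
    next
      case False
      have spos: "sin \<theta> > 0" using False sin_ge_zero[OF th] by simp
      define R where "R = complex_of_real r"
      define S where "S = complex_of_real (sin \<theta>)"
      define E where "E = cis \<phi>"
      define W where "W = ZZ (r * sin \<theta> * sin \<phi>) (r * sin \<theta> * cos \<phi>) (r * cos \<theta>)"
      have nz: "R \<noteq> 0" "S \<noteq> 0" "E \<noteq> 0" using rpos spos by (auto simp: R_def S_def E_def)
      have t: "r * (cos \<phi>)\<^sup>2 * sin \<theta> + r * (sin \<phi>)\<^sup>2 * sin \<theta> = r * sin \<theta>"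
      proof -
        have "r * (cos \<phi>)\<^sup>2 * sin \<theta> + r * (sin \<phi>)\<^sup>2 * sin \<theta> = r * sin \<theta> * ((sin \<phi>)\<^sup>2 + (cos \<phi>)\<^sup>2)"
          by (simp only: distrib_left) (simp only: mult_ac add_ac)
        then show ?thesis by simp
      qed
      have EW: "E * W = \<i> * R * S"
        apply (simp add: E_def W_def R_def S_def complex_eq_iff algebra_simps)
        using t by (simp add: mult.assoc mult.left_commute power2_eq_square)
      then have Wd: "W = \<i> * R * S / E" using nz by (simp add: field_simps)
      have rr: "r\<^sup>2 = (r * sin \<theta> * sin \<phi>)\<^sup>2 + (r * sin \<theta> * cos \<phi>)\<^sup>2 + (r * cos \<theta>)\<^sup>2"
      proof -
        have "(r * sin \<theta> * sin \<phi>)\<^sup>2 + (r * sin \<theta> * cos \<phi>)\<^sup>2 + (r * cos \<theta>)\<^sup>2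
           = r\<^sup>2 * ((sin \<theta>)\<^sup>2 * ((sin \<phi>)\<^sup>2 + (cos \<phi>)\<^sup>2) + (cos \<theta>)\<^sup>2)"
          by (rule sq_expand)
        then show ?thesis by simp
      qed
      have K: "R ^ j * W ^ k * L = (-1) ^ (k + j) * R ^ (2 * k) * W ^ j * complex_of_real (DD k j (cos \<theta>))"
        using key[OF rpos rr, of j k] by (simp add: L_def R_def W_def)
      show ?thesis
      proof (cases "j = 2 * k + 1")
        case True
        have "DD k j (cos \<theta>) = 0" using True by (intro DD_high) simp
        then have "L = 0" using K nz Wd by simp
        then show ?thesis using AL True unfolding L_def[symmetric] by simp
      next
        case jne: False
        show ?thesis
        proof (cases "k \<le> j")
          case True
          then obtain m where jm: "j = k + m" using le_Suc_ex by blast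
          have L: "L = inverse (\<i> ^ m) * R ^ k * inverse (E ^ m) * (S ^ m * complex_of_real (DD k j (cos \<theta>)))"
            using alg_ge[OF nz Wd, of k m L] K jm by simp
          have i1: "int k - int j = - int m" using jm by simp
          have i2: "int j - int k = int m" using jm by simp
          have AL2: "assoc_legendre k (int m) (cos \<theta>) = 1 / (fact k * 2 ^ k) * sin \<theta> ^ m * DD k j (cos \<theta>)"
            using AL jne unfolding i2 by simp
          show ?thesis
            unfolding L_def[symmetric] exp_cis_powi i1 i2 AL2
            by (simp add: L cKe power_int_minus R_def S_def E_def)
        next
          case False
          then obtain m where km: "k = j + m" using le_Suc_ex[of j k] by auto
          have L: "L = \<i> ^ m * R ^ (j + m) * E ^ m * (inverse (S ^ m) * complex_of_real (DD k j (cos \<theta>)))"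
            using alg_lt[OF nz Wd, of j m L] K km by simp
          have i1: "int k - int j = int m" using km by simp
          have i2: "int j - int k = - int m" using km by simp
          have AL2: "assoc_legendre k (- int m) (cos \<theta>) = 1 / (fact k * 2 ^ k) * inverse (sin \<theta> ^ m) * DD k j (cos \<theta>)"
            using AL jne unfolding i2 by (simp add: power_int_minus)
          show ?thesis
            unfolding L_def[symmetric] exp_cis_powi i1 i2 AL2
            using L km by (simp add: cK_def R_def S_def E_def)
        qed
      qed
    qed
  qed
qed


lemma scalar_b:
  fixes k j :: nat and r \<theta> \<phi> :: real
  assumes j: "j \<le> 2 * k + 1" and r: "0 \<le> r" and th: "0 \<le> \<theta>" "\<theta> \<le> pi"
  shows "eps pm * of_nat j * cK k * (Lop ^^ (j - 1)) (\<lambda>x y z. ZB x y z ^ k) (r * sin \<theta> * sin \<phi>) (r * sin \<theta> * cos \<phi>) (r * cos \<theta>) =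
    \<i> powi (int k - int j) * complex_of_real (r ^ k) *
                 exp (\<i> * of_int (int k - int j) * complex_of_real \<phi>) *
                 ((if pm then 1 else -1) * \<i> * of_nat j * exp (\<i> * complex_of_real \<phi>) *
                  complex_of_real (assoc_legendre k (int j - int k - 1) (cos \<theta>)))"
proof (cases j)
  case 0 then show ?thesis by simp
next
  case (Suc i)
  have i: "i \<le> 2 * k + 1" using j Suc by simp
  note S = scalar_main[OF i r th, of \<phi>]
  define n where "n = int k - int j"
  have n1: "int k - int i = n + 1" using Suc by (simp add: n_def)
  have n2: "int j - int k - 1 = int i - int k" using Suc by simp
  have p1: "\<i> powi (n + 1) = \<i> powi n * \<i>" by (simp add: power_int_add_1)
  have p2: "exp (\<i> * of_int (n + 1) * complex_of_real \<phi>) = exp (\<i> * of_int n * complex_of_real \<phi>) * exp (\<i> * complex_of_real \<phi>)"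
    by (simp add: exp_add[symmetric] algebra_simps)
  have "eps pm * of_nat j * cK k * (Lop ^^ (j - 1)) (\<lambda>x y z. ZB x y z ^ k) (r * sin \<theta> * sin \<phi>) (r * sin \<theta> * cos \<phi>) (r * cos \<theta>)
     = eps pm * of_nat j * (cK k * (Lop ^^ i) (\<lambda>x y z. ZB x y z ^ k) (r * sin \<theta> * sin \<phi>) (r * sin \<theta> * cos \<phi>) (r * cos \<theta>))"
    using Suc by (simp add: ac_simps)
  also have "\<dots> = eps pm * of_nat j * (\<i> powi (n + 1) * complex_of_real (r ^ k) * exp (\<i> * of_int (n + 1) * complex_of_real \<phi>)
    * complex_of_real (assoc_legendre k (int i - int k) (cos \<theta>)))"
    unfolding S n1 ..
  also have "\<dots> = \<i> powi n * complex_of_real (r ^ k) *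
                 exp (\<i> * of_int n * complex_of_real \<phi>) *
                 ((if pm then 1 else -1) * \<i> * of_nat j * exp (\<i> * complex_of_real \<phi>) *
                  complex_of_real (assoc_legendre k (int j - int k - 1) (cos \<theta>)))"
    unfolding p1 p2 n2 by (simp add: eps_def)
  finally show ?thesis unfolding n_def .
qed

theorem theorem3p4:
  fixes k j :: nat and pm :: bool and r \<theta> \<phi> :: real
  assumes "j \<le> 2 * k + 1" and "0 \<le> r" and "- pi \<le> \<phi>" and "\<phi> \<le> pi"
    and "0 \<le> \<theta>" and "\<theta> \<le> pi"
  shows "Fkj k pm j (r * sin \<theta> * sin \<phi>) (r * sin \<theta> * cos \<phi>) (r * cos \<theta>) =
    cl_add
      (cl_scale (\<i> powi (int k - int j) * complex_of_real (r ^ k) *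
                 exp (\<i> * of_int (int k - int j) * complex_of_real \<phi>) *
                 complex_of_real (assoc_legendre k (int j - int k) (cos \<theta>)))
                (vplus pm))
      (cl_scale (\<i> powi (int k - int j) * complex_of_real (r ^ k) *
                 exp (\<i> * of_int (int k - int j) * complex_of_real \<phi>) *
                 ((if pm then 1 else -1) * \<i> * of_nat j * exp (\<i> * complex_of_real \<phi>) *
                  complex_of_real (assoc_legendre k (int j - int k - 1) (cos \<theta>))))
                (vminus pm))"
  by (simp only: Fkj_rep rep_def scalar_main[OF assms(1,2,5,6), of \<phi>] scalar_b[OF assms(1,2,5,6), of pm \<phi>])


end
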